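(* Let $f:\mathbb{R}^n\to\mathbb{R}$ and $a:\mathbb{R}^n\to\mathbb{R}^m$ be twice differentiable on $\mathbb{R}^n$, let $\beta_1\in(0,1)$, $\beta_2\in(0,1)$, and $w\in\mathbb{R}^m$ with $w\ge0$. For any constants $C,\mu>0$ the set $\mathbb{Q}_{\mu,C}$ is compact.
   Context: $e$ denotes the all-ones vector, $S=\mathrm{diag}(s)$. For $\mu>0$: $\psi_\mu(x)=f(x)-\mu\sum_{i=1}^m(\beta_1a_i(x)+\log(\mu w_i-a_i(x)))$ (defined when $a(x)<\mu w$), and $\phi_\mu(x,s,y)=\psi_\mu(x)+\|Sy-\mu e\|_\infty^3/\mu^2$. The set $\mathbb{Q}_{\mu,C}$ consists of all $(x,y,s)\in\mathbb{R}^n\times\mathbb{R}^m_{++}\times\mathbb{R}^m_{++}$ such that $s_iy_i/\mu\in[\beta_2,1/\beta_2]$ for all $i$, $a(x)+s=\mu w$, $\phi_\mu(x,s,y)\le C$, and $\|x\|\le C$ (Euclidean norm). *)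

theory Defs
  imports "HOL-Analysis.Analysis"
begin

definition twice_differentiable ::
  "('a::real_normed_vector \<Rightarrow> 'b::real_normed_vector) \<Rightarrow> bool" where
  "twice_differentiable g \<longleftrightarrow>
     (\<exists>Dg :: 'a \<Rightarrow> ('a \<Rightarrow>\<^sub>L 'b).
        (\<forall>x. (g has_derivative blinfun_apply (Dg x)) (at x)) \<and>
        (\<forall>x. Dg differentiable (at x)))"

definition psi ::
  "(real^'n \<Rightarrow> real) \<Rightarrow> (real^'n \<Rightarrow> real^'m::finite) \<Rightarrow> real^'m \<Rightarrow> real \<Rightarrow> real
     \<Rightarrow> real^'n \<Rightarrow> real" where
  "psi f a w beta1 mu x =
     f x - mu * (\<Sum>i\<in>UNIV. beta1 * a x $ i + ln (mu * w $ i - a x $ i))"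

definition phi ::
  "(real^'n \<Rightarrow> real) \<Rightarrow> (real^'n \<Rightarrow> real^'m::finite) \<Rightarrow> real^'m \<Rightarrow> real \<Rightarrow> real
     \<Rightarrow> real^'n \<Rightarrow> real^'m \<Rightarrow> real^'m \<Rightarrow> real" where
  "phi f a w beta1 mu x s y =
     psi f a w beta1 mu x + (MAX i\<in>UNIV. \<bar>s $ i * y $ i - mu\<bar>) ^ 3 / mu ^ 2"

definition Qset ::
  "(real^'n \<Rightarrow> real) \<Rightarrow> (real^'n \<Rightarrow> real^'m::finite) \<Rightarrow> real^'m \<Rightarrow> real \<Rightarrow> real
     \<Rightarrow> real \<Rightarrow> real \<Rightarrow> ((real^'n) \<times> (real^'m) \<times> (real^'m)) set" where
  "Qset f a w beta1 beta2 mu C =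
     {(x, y, s). (\<forall>i. y $ i > 0) \<and> (\<forall>i. s $ i > 0) \<and>
        (\<forall>i. beta2 \<le> s $ i * y $ i / mu \<and> s $ i * y $ i / mu \<le> 1 / beta2) \<and>
        a x + s = mu *\<^sub>R w \<and>
        phi f a w beta1 mu x s y \<le> C \<and>
        norm x \<le> C}"

end

theory Submission
  imports Defs
begin

lemma cont_Max_fin:
  fixes g :: "'i \<Rightarrow> 'a::topological_space \<Rightarrow> real"
  assumes "finite I" "I \<noteq> {}" "\<And>i. i \<in> I \<Longrightarrow> continuous_on S (g i)"
  shows "continuous_on S (\<lambda>p. MAX i\<in>I. g i p)"
  using assms
proof (induction I rule: finite_ne_induct)
  case (singleton x)
  then show ?case by simp
next
  case (insert x F)
  have "(\<lambda>p. MAX i\<in>insert x F. g i p) = (\<lambda>p. max (g x p) (MAX i\<in>F. g i p))"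
    using insert by (simp add: Max_insert)
  then show ?case using insert by (auto intro!: continuous_on_max)
qed

lemma td_cont:
  assumes "twice_differentiable g"
  shows "continuous_on S g"
proof -
  from assms obtain Dg where "\<forall>x. (g has_derivative blinfun_apply (Dg x)) (at x)"
    unfolding twice_differentiable_def by blast
  then have "\<forall>x. isCont g x" using has_derivative_continuous by blast
  then show ?thesis by (simp add: continuous_at_imp_continuous_on)
qed

theorem lemma4:
  fixes f :: "real^'n \<Rightarrow> real" and a :: "real^'n \<Rightarrow> real^'m"
    and beta1 beta2 mu C :: real and w :: "real^'m"
  assumes "twice_differentiable f" and "twice_differentiable a"
    and "0 < beta1" "beta1 < 1" and "0 < beta2" "beta2 < 1"
    and "\<forall>i. w $ i \<ge> 0"
    and "C > 0" and "mu > 0"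
  shows "compact (Qset f a w beta1 beta2 mu C)"
proof -
  note fc = td_cont[OF assms(1)] and ac = td_cont[OF assms(2)]
  have "compact (f ` cball 0 C)" by (rule compact_continuous_image[OF fc]) simp
  then obtain Mf where Mf: "Mf > 0" "\<And>x. x \<in> cball 0 C \<Longrightarrow> norm (f x) \<le> Mf"
    using compact_imp_bounded bounded_pos by (metis imageI)
  have "compact (a ` cball 0 C)" by (rule compact_continuous_image[OF ac]) simp
  then obtain Ma where Ma: "Ma > 0" "\<And>x. x \<in> cball 0 C \<Longrightarrow> norm (a x) \<le> Ma"
    using compact_imp_bounded bounded_pos by (metis imageI)
  define Sm where "Sm = mu * norm w + Ma + 1"
  have Sm1: "Sm \<ge> 1" using Ma assms(9) by (simp add: Sm_def)
  define N where "N = real CARD('m)"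
  have N0: "N \<ge> 0" by (simp add: N_def)
  define L where "L = (- Mf - C) / mu - N * Ma - N * ln Sm"
  define dl where "dl = exp L"
  have dl0: "dl > 0" by (simp add: dl_def)
  define ylo where "ylo = beta2 * mu / Sm"
  define yhi where "yhi = mu / (beta2 * dl)"
  define K where "K = cball (0::real^'n) C \<times> cbox (vec ylo :: real^'m) (vec yhi) \<times> cbox (vec dl :: real^'m) (vec Sm)"
  have cK: "compact K" unfolding K_def by (intro compact_Times compact_cball compact_cbox)
  define phi' where "phi' = (\<lambda>p::(real^'n) \<times> (real^'m) \<times> (real^'m).
      f (fst p) - mu * (\<Sum>i\<in>UNIV. beta1 * a (fst p) $ i + ln (snd (snd p) $ i))
      + (MAX i\<in>UNIV. \<bar>snd (snd p) $ i * fst (snd p) $ i - mu\<bar>) ^ 3 / mu ^ 2)"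
  define A1 where "A1 = {p::(real^'n) \<times> (real^'m) \<times> (real^'m). \<forall>i. beta2 \<le> snd (snd p) $ i * fst (snd p) $ i / mu \<and> snd (snd p) $ i * fst (snd p) $ i / mu \<le> 1 / beta2}"
  define A2 where "A2 = {p::(real^'n) \<times> (real^'m) \<times> (real^'m). a (fst p) + snd (snd p) = mu *\<^sub>R w}"
  have Ksub: "Qset f a w beta1 beta2 mu C \<subseteq> K"
  proof
    fix p assume pQ: "p \<in> Qset f a w beta1 beta2 mu C"
    obtain x y s where p: "p = (x, y, s)" by (cases p) auto
    have y0: "\<forall>i. y $ i > 0" and s0: "\<forall>i. s $ i > 0"
      and rat: "\<forall>i. beta2 \<le> s $ i * y $ i / mu \<and> s $ i * y $ i / mu \<le> 1 / beta2"
      and eq: "a x + s = mu *\<^sub>R w" and ph: "phi f a w beta1 mu x s y \<le> C"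
      and nx: "norm x \<le> C"
      using pQ unfolding p Qset_def by auto
    have xc: "x \<in> cball 0 C" using nx by simp
    have si: "s $ i = mu * w $ i - a x $ i" for i
      using arg_cong[OF eq, of "\<lambda>v. v $ i"] by simp
    have sle: "s $ i \<le> Sm" for i
    proof -
      have "\<bar>w $ i\<bar> \<le> norm w" by (rule component_le_norm_cart)
      moreover have "\<bar>a x $ i\<bar> \<le> Ma"
        using component_le_norm_cart[of "a x" i] Ma(2)[OF xc] by linarith
      moreover have "mu * w $ i \<le> mu * norm w" using calculation(1) assms(9)
        by (intro mult_left_mono) auto
      ultimately show ?thesis unfolding si Sm_def by linarith
    qed
    have lnle: "ln (s $ i) \<le> ln Sm" for i using sle[of i] s0 Sm1 by (subst ln_le_cancel_iff) auto
    have cube: "(MAX i\<in>UNIV. \<bar>s $ i * y $ i - mu\<bar>) ^ 3 / mu ^ 2 \<ge> 0"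
    proof -
      have "(MAX i\<in>UNIV. \<bar>s $ i * y $ i - mu\<bar>) \<ge> \<bar>s $ undefined * y $ undefined - mu\<bar>"
        by (rule Max_ge) auto
      then have "(MAX i\<in>UNIV. \<bar>s $ i * y $ i - mu\<bar>) \<ge> 0" by linarith
      then show ?thesis by simp
    qed
    define SA where "SA = (\<Sum>i\<in>UNIV. a x $ i)"
    define SL where "SL = (\<Sum>i\<in>UNIV. ln (s $ i))"
    have psum: "(\<Sum>i\<in>UNIV. beta1 * a x $ i + ln (mu * w $ i - a x $ i)) = beta1 * SA + SL"
      unfolding SA_def SL_def si[symmetric] by (simp add: sum.distrib sum_distrib_left)
    have ps: "f x - mu * (beta1 * SA + SL) \<le> C"
      using ph cube unfolding phi_def psi_def psum by linarith
    have fx: "\<bar>f x\<bar> \<le> Mf" using Mf(2)[OF xc] by simp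
    have "mu * (beta1 * SA + SL) \<ge> - Mf - C" using ps fx by linarith
    then have T: "beta1 * SA + SL \<ge> (- Mf - C) / mu" using assms(9)
      by (simp add: pos_divide_le_eq mult.commute)
    have SAle: "SA \<le> N * Ma"
    proof -
      have "SA \<le> of_nat (card (UNIV::'m set)) * Ma" unfolding SA_def
        by (rule sum_bounded_above) (use component_le_norm_cart[of "a x"] Ma(2)[OF xc] in \<open>smt (verit) abs_le_iff\<close>)
      then show ?thesis by (simp add: N_def)
    qed
    have "beta1 * SA \<le> beta1 * (N * Ma)" using SAle assms(3) by (intro mult_left_mono) auto
    also have "\<dots> \<le> N * Ma" using assms(3,4) N0 Ma(1) by (intro mult_left_le_one_le) auto
    finally have bS: "beta1 * SA \<le> N * Ma" .
    have lnb: "ln (s $ j) \<ge> L" for j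
    proof -
      have "SL = ln (s $ j) + (\<Sum>i\<in>UNIV-{j}. ln (s $ i))" unfolding SL_def
        by (simp add: sum.remove)
      moreover have "(\<Sum>i\<in>UNIV-{j}. ln (s $ i)) \<le> of_nat (card (UNIV-{j}::'m set)) * ln Sm"
        by (rule sum_bounded_above) (use lnle in auto)
      moreover have "of_nat (card (UNIV-{j}::'m set)) * ln Sm \<le> N * ln Sm"
        unfolding N_def using Sm1 by (intro mult_right_mono) (auto simp: card_Diff_subset)
      ultimately show ?thesis unfolding L_def using T bS by linarith
    qed
    have sge: "s $ j \<ge> dl" for j
      unfolding dl_def using lnb[of j] s0 by (metis exp_le_cancel_iff exp_ln)
    have yge: "y $ i \<ge> ylo" for i
    proof -
      have "beta2 * mu \<le> s $ i * y $ i" using rat assms(9) by (simp add: le_divide_eq)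
      also have "\<dots> \<le> Sm * y $ i" using sle[of i] y0 by (intro mult_right_mono) (auto simp: less_imp_le)
      finally show ?thesis unfolding ylo_def using Sm1 by (simp add: divide_le_eq mult.commute)
    qed
    have yle: "y $ i \<le> yhi" for i
    proof -
      have "s $ i * y $ i \<le> mu / beta2" using rat assms(9) by (simp add: divide_le_eq)
      moreover have "dl * y $ i \<le> s $ i * y $ i" using sge[of i] y0 by (intro mult_right_mono) (auto simp: less_imp_le)
      ultimately have "dl * y $ i \<le> mu / beta2" by linarith
      then show ?thesis unfolding yhi_def using dl0 assms(5)
        by (simp add: le_divide_eq field_simps)
    qed
    show "p \<in> K" unfolding p K_def using xc yge yle sge sle
      by (simp add: mem_box_cart)
  qed
  have Qeq: "Qset f a w beta1 beta2 mu C = (K \<inter> phi' -` {..C}) \<inter> A1 \<inter> A2"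
  proof
    show "Qset f a w beta1 beta2 mu C \<subseteq> (K \<inter> phi' -` {..C}) \<inter> A1 \<inter> A2"
    proof
      fix p assume pQ: "p \<in> Qset f a w beta1 beta2 mu C"
      obtain x y s where p: "p = (x, y, s)" by (cases p) auto
      have eq: "a x + s = mu *\<^sub>R w" and ph: "phi f a w beta1 mu x s y \<le> C"
        and rat: "\<forall>i. beta2 \<le> s $ i * y $ i / mu \<and> s $ i * y $ i / mu \<le> 1 / beta2"
        using pQ unfolding p Qset_def by auto
      have si: "mu * w $ i - a x $ i = s $ i" for i
        using arg_cong[OF eq, of "\<lambda>v. v $ i"] by simp
      have "phi' p = phi f a w beta1 mu x s y"
        unfolding phi'_def phi_def psi_def p si by simp
      then show "p \<in> (K \<inter> phi' -` {..C}) \<inter> A1 \<inter> A2"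
        using Ksub pQ ph rat eq unfolding A1_def A2_def p by auto
    qed
  next
    show "(K \<inter> phi' -` {..C}) \<inter> A1 \<inter> A2 \<subseteq> Qset f a w beta1 beta2 mu C"
    proof
      fix p assume pK: "p \<in> (K \<inter> phi' -` {..C}) \<inter> A1 \<inter> A2"
      obtain x y s where p: "p = (x, y, s)" by (cases p) auto
      have ylo0: "ylo > 0" unfolding ylo_def using assms(5,9) Sm1 by simp
      have xc: "norm x \<le> C" and yb: "\<forall>i. ylo \<le> y $ i" and sb: "\<forall>i. dl \<le> s $ i"
        using pK unfolding p K_def by (auto simp: mem_box_cart)
      have y0: "\<forall>i. y $ i > 0" using yb ylo0 by (meson less_le_trans)
      have s0: "\<forall>i. s $ i > 0" using sb dl0 by (meson less_le_trans)
      have eq: "a x + s = mu *\<^sub>R w" and rat: "\<forall>i. beta2 \<le> s $ i * y $ i / mu \<and> s $ i * y $ i / mu \<le> 1 / beta2"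
        and ph: "phi' p \<le> C"
        using pK unfolding p A1_def A2_def by auto
      have si: "mu * w $ i - a x $ i = s $ i" for i
        using arg_cong[OF eq, of "\<lambda>v. v $ i"] by simp
      have "phi' p = phi f a w beta1 mu x s y"
        unfolding phi'_def phi_def psi_def p si by simp
      then show "p \<in> Qset f a w beta1 beta2 mu C"
        unfolding p Qset_def using xc y0 s0 rat eq ph p by auto
    qed
  qed
  have cont: "continuous_on K phi'"
  proof -
    have ln: "continuous_on K (\<lambda>p. ln (snd (snd p) $ i))" for i
    proof (rule continuous_on_ln)
      show "continuous_on K (\<lambda>p. snd (snd p) $ i)" by (intro continuous_intros)
      show "\<forall>p\<in>K. snd (snd p) $ i \<noteq> 0"
      proof
        fix p assume "p \<in> K"
        then have "snd (snd p) \<in> cbox (vec dl) (vec Sm)" unfolding K_def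
          by (metis mem_Times_iff)
        then have "dl \<le> snd (snd p) $ i" by (simp add: mem_box_cart)
        then show "snd (snd p) $ i \<noteq> 0" using dl0 by linarith
      qed
    qed
    have fa: "continuous_on K (\<lambda>p. f (fst p))"
      by (rule continuous_on_compose2[OF fc]) (auto intro: continuous_intros)
    have aa: "continuous_on K (\<lambda>p. a (fst p) $ i)" for i
      by (intro continuous_on_component continuous_on_compose2[OF ac]) (auto intro: continuous_intros)
    have mx: "continuous_on K (\<lambda>p. MAX i\<in>UNIV. \<bar>snd (snd p) $ i * fst (snd p) $ i - mu\<bar>)"
      by (rule cont_Max_fin) (auto intro!: continuous_intros)
    show ?thesis unfolding phi'_def
      by (intro fa aa ln mx continuous_on_add continuous_on_diff continuous_on_mult_left continuous_on_sum continuous_on_divide continuous_on_power continuous_on_const ballI) (use assms(9) in auto)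
  qed
  have "closed (K \<inter> phi' -` {..C})"
    by (rule continuous_closed_preimage[OF cont compact_imp_closed[OF cK]]) simp
  moreover have "closed A1" unfolding A1_def
    by (intro closed_Collect_all closed_Collect_conj closed_Collect_le continuous_intros) (use assms(9) in auto)
  moreover have "closed A2" unfolding A2_def
    by (intro closed_Collect_eq continuous_intros continuous_on_compose2[OF ac] ) auto
  ultimately have "closed (Qset f a w beta1 beta2 mu C)" unfolding Qeq by blast
  moreover have "bounded (Qset f a w beta1 beta2 mu C)"
    using Ksub cK compact_imp_bounded bounded_subset by blast
  ultimately show ?thesis by (simp add: compact_eq_bounded_closed)
qed

end
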